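(* Let $n\ge 1$ and let $w$ be a word of length $m$ over the alphabet $[n+1]$ that contains, for every permutation $\pi$ of length $n$, a subsequence order-isomorphic to $\pi$. Then $(n+1)\left(\frac{m}{n+1}\right)^n\ge n!$. Consequently $m\ge (n+1)\,(n!/(n+1))^{1/n}$, and in particular $m\ge (1-o(1))\,n^2/e$ as $n\to\infty$.
   Context: A permutation of length $n$ is a word containing each letter of $[n]=\{1,\dots,n\}$ exactly once. Words $u,v$ of length $k$ are order-isomorphic if $u(i)>u(j)\iff v(i)>v(j)$ for all $i,j\in[k]$. A word $w$ contains a subsequence order-isomorphic to $\pi$ if there are indices $i_1<\cdots<i_n$ with $w(i_1)\cdots w(i_n)$ order-isomorphic to $\pi$. *)

theory Defs
  imports Complex_Main "HOL-Library.Sublist"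
begin

definition order_iso :: "nat list \<Rightarrow> nat list \<Rightarrow> bool" where
  "order_iso u v \<longleftrightarrow> length u = length v \<and>
     (\<forall>i<length u. \<forall>j<length u. (u ! i > u ! j \<longleftrightarrow> v ! i > v ! j))"

definition is_perm_word :: "nat \<Rightarrow> nat list \<Rightarrow> bool" where
  "is_perm_word n p \<longleftrightarrow> length p = n \<and> distinct p \<and> set p = {1..n}"

definition contains_pattern :: "nat list \<Rightarrow> nat list \<Rightarrow> bool" where
  "contains_pattern w p \<longleftrightarrow> (\<exists>u. subseq u w \<and> order_iso u p)"

definition superpattern :: "nat \<Rightarrow> nat list \<Rightarrow> bool" where
  "superpattern n w \<longleftrightarrow> (\<forall>p. is_perm_word n p \<longrightarrow> contains_pattern w p)"

end

theory Submission imports Defs "HOL-Combinatorics.Multiset_Permutations" "HOL-Library.FuncSet" begin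

lemma R1:
  fixes a t :: real and j :: nat
  assumes a: "0 \<le> a" and t: "0 \<le> t"
  shows "t ^ Suc j + real (Suc j) * a * t ^ j \<le> real (Suc (Suc j)) * ((a + real (Suc j) * t) / real (Suc (Suc j))) ^ Suc j"
proof (cases "t = 0")
  case True
  then show ?thesis using a by (cases j) auto
next
  case False
  hence tp: "t > 0" using t by simp
  define s where "s = (a + real (Suc j) * t) / real (Suc (Suc j))"
  have hs: "real (Suc (Suc j)) * s = a + real (Suc j) * t" unfolding s_def by simp
  have s0: "0 \<le> s" unfolding s_def using a t by simp
  have "1 + real (Suc j) * (s / t - 1) \<le> (1 + (s/t - 1)) ^ Suc j"
    by (rule Bernoulli_inequality) (use s0 tp in simp)
  hence "(1 + real (Suc j) * (s / t - 1)) * t ^ Suc j \<le> (s/t) ^ Suc j * t ^ Suc j"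
    using tp by (intro mult_right_mono) auto
  also have "(s/t) ^ Suc j * t ^ Suc j = s ^ Suc j" using tp by (simp add: power_divide)
  also have "(1 + real (Suc j) * (s / t - 1)) * t ^ Suc j = t ^ Suc j + real (Suc j) * (s - t) * t ^ j"
    using tp by (simp add: field_simps)
  finally have B: "t ^ Suc j + real (Suc j) * (s - t) * t ^ j \<le> s ^ Suc j" .
  have "real (Suc (Suc j)) * (t ^ Suc j + real (Suc j) * (s - t) * t ^ j) = real (Suc (Suc j)) * t ^ Suc j + real (Suc j) * (real (Suc (Suc j)) * s - real (Suc (Suc j)) * t) * t ^ j"
    by (simp add: algebra_simps)
  also have "\<dots> = real (Suc (Suc j)) * t ^ Suc j + real (Suc j) * (a + real (Suc j) * t - real (Suc (Suc j)) * t) * t ^ j"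
    using hs by simp
  also have "\<dots> = t ^ Suc j + real (Suc j) * a * t ^ j"
    by (simp add: algebra_simps)
  finally have E: "t ^ Suc j + real (Suc j) * a * t ^ j = real (Suc (Suc j)) * (t ^ Suc j + real (Suc j) * (s - t) * t ^ j)" ..
  have "t ^ Suc j + real (Suc j) * a * t ^ j = real (Suc (Suc j)) * (t ^ Suc j + real (Suc j) * (s - t) * t ^ j)"
    by (rule E)
  also have "\<dots> \<le> real (Suc (Suc j)) * s ^ Suc j" using B by (intro mult_left_mono) auto
  finally show ?thesis unfolding s_def .
qed

lemma R2:
  fixes a t :: real and k :: nat
  assumes a: "0 \<le> a" and t: "0 \<le> t"
  shows "a * t ^ k \<le> ((a + real k * t) / real (Suc k)) ^ Suc k"
proof (cases "t = 0")
  case True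
  then show ?thesis using a by (cases k) auto
next
  case False
  hence tp: "t > 0" using t by simp
  define s where "s = (a + real k * t) / real (Suc k)"
  have hs: "real (Suc k) * s = a + real k * t" unfolding s_def by simp
  have s0: "0 \<le> s" unfolding s_def using a t by simp
  have "1 + real (Suc k) * (s / t - 1) \<le> (1 + (s/t - 1)) ^ Suc k"
    by (rule Bernoulli_inequality) (use s0 tp in simp)
  hence "(1 + real (Suc k) * (s / t - 1)) * t ^ Suc k \<le> (s/t) ^ Suc k * t ^ Suc k"
    using tp by (intro mult_right_mono) auto
  also have "(s/t) ^ Suc k * t ^ Suc k = s ^ Suc k" using tp by (simp add: power_divide)
  also have "(1 + real (Suc k) * (s / t - 1)) * t ^ Suc k = t ^ Suc k + real (Suc k) * (s - t) * t ^ k"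
    using tp by (simp add: field_simps)
  also have "t ^ Suc k + real (Suc k) * (s - t) * t ^ k = a * t ^ k"
    using hs by (simp add: algebra_simps)
  finally show ?thesis unfolding s_def .
qed

lemma mac:
  fixes a :: "'b \<Rightarrow> real"
  assumes "finite A" "card A = Suc k" "\<forall>i\<in>A. 0 \<le> a i"
  shows "(\<Sum>i\<in>A. \<Prod>j\<in>A-{i}. a j) \<le> real (Suc k) * ((\<Sum>i\<in>A. a i) / real (Suc k)) ^ k
    \<and> (\<Prod>j\<in>A. a j) \<le> ((\<Sum>i\<in>A. a i) / real (Suc k)) ^ Suc k"
  using assms
proof (induction A arbitrary: k rule: finite_induct)
  case empty
  then show ?case by simp
next
  case (insert x B)
  show ?case
  proof (cases k)
    case 0
    then have "B = {}" using insert by simp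
    then show ?thesis using 0 by simp
  next
    case (Suc j)
    have cB: "card B = Suc j" using insert Suc by simp
    have nn: "\<forall>i\<in>B. 0 \<le> a i" and ax: "0 \<le> a x" using insert.prems by auto
    define t where "t = (\<Sum>i\<in>B. a i) / real (Suc j)"
    have t0: "0 \<le> t" unfolding t_def using nn by (simp add: sum_nonneg)
    have SB: "(\<Sum>i\<in>B. a i) = real (Suc j) * t" unfolding t_def by simp
    from insert.IH[OF cB nn] have
      IH1: "(\<Sum>i\<in>B. \<Prod>j\<in>B-{i}. a j) \<le> real (Suc j) * t ^ j" and
      IH2: "(\<Prod>j\<in>B. a j) \<le> t ^ Suc j" unfolding t_def by auto
    have S: "(\<Sum>i\<in>insert x B. a i) = a x + real (Suc j) * t"
      using insert.hyps SB by simp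
    have e1: "(\<Sum>i\<in>insert x B. \<Prod>j\<in>insert x B-{i}. a j)
        = (\<Prod>j\<in>B. a j) + a x * (\<Sum>i\<in>B. \<Prod>j\<in>B-{i}. a j)"
    proof -
      have "(\<Sum>i\<in>insert x B. \<Prod>j\<in>insert x B-{i}. a j)
          = (\<Prod>j\<in>insert x B-{x}. a j) + (\<Sum>i\<in>B. \<Prod>j\<in>insert x B-{i}. a j)"
        using insert.hyps by (simp add: sum.insert)
      also have "(\<Prod>j\<in>insert x B-{x}. a j) = (\<Prod>j\<in>B. a j)"
        using insert.hyps by simp
      also have "(\<Sum>i\<in>B. \<Prod>j\<in>insert x B-{i}. a j) = (\<Sum>i\<in>B. a x * (\<Prod>j\<in>B-{i}. a j))"
      proof (rule sum.cong)
        fix i assume "i \<in> B"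
        then have "insert x B - {i} = insert x (B - {i})" using insert.hyps by auto
        then show "(\<Prod>j\<in>insert x B-{i}. a j) = a x * (\<Prod>j\<in>B-{i}. a j)"
          using insert.hyps by simp
      qed simp
      finally show ?thesis by (simp add: sum_distrib_left)
    qed
    have "(\<Sum>i\<in>insert x B. \<Prod>j\<in>insert x B-{i}. a j) \<le> t ^ Suc j + a x * (real (Suc j) * t ^ j)"
      unfolding e1 using IH1 IH2 ax by (intro add_mono mult_left_mono) auto
    also have "\<dots> \<le> real (Suc (Suc j)) * ((a x + real (Suc j) * t) / real (Suc (Suc j))) ^ Suc j"
      using R1[OF ax t0, of j] by (simp add: algebra_simps)
    finally have G1: "(\<Sum>i\<in>insert x B. \<Prod>j\<in>insert x B-{i}. a j) \<le> real (Suc (Suc j)) * ((a x + real (Suc j) * t) / real (Suc (Suc j))) ^ Suc j" .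
    have "(\<Prod>j\<in>insert x B. a j) = a x * (\<Prod>j\<in>B. a j)" using insert.hyps by simp
    also have "\<dots> \<le> a x * t ^ Suc j" using IH2 ax by (intro mult_left_mono) auto
    also have "\<dots> \<le> ((a x + real (Suc j) * t) / real (Suc (Suc j))) ^ Suc (Suc j)"
      using R2[OF ax t0, of "Suc j"] by simp
    finally have G2: "(\<Prod>j\<in>insert x B. a j) \<le> ((a x + real (Suc j) * t) / real (Suc (Suc j))) ^ Suc (Suc j)" .
    show ?thesis using G1 G2 S Suc by simp
  qed
qed

lemma nths_restrict: "nths w (N \<inter> {..<length w}) = nths w N"
  unfolding nths_def by (intro arg_cong[where f="map fst"] filter_cong) (auto dest: set_zip_rightD)

lemma rank_perm:
  assumes p: "is_perm_word n p" and i: "i < n"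
  shows "card {j. j < n \<and> p!j \<le> p!i} = p!i"
proof -
  have len: "length p = n" and d: "distinct p" and sp: "set p = {1..n}"
    using p unfolding is_perm_word_def by auto
  have pi: "p!i \<in> {1..n}" using i len sp nth_mem by metis
  have "(nth p) ` {j. j < n \<and> p!j \<le> p!i} = {1..p!i}"
  proof
    show "(nth p) ` {j. j < n \<and> p!j \<le> p!i} \<subseteq> {1..p!i}"
    proof
      fix v assume "v \<in> (nth p) ` {j. j < n \<and> p!j \<le> p!i}"
      then obtain j where "j < n" "p!j \<le> p!i" "v = p!j" by auto
      moreover have "p!j \<in> {1..n}" using \<open>j<n\<close> len sp nth_mem by metis
      ultimately show "v \<in> {1..p!i}" by auto
    qed
  next
    show "{1..p!i} \<subseteq> (nth p) ` {j. j < n \<and> p!j \<le> p!i}"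
    proof
      fix v assume v: "v \<in> {1..p!i}"
      then have "v \<in> set p" using pi sp by auto
      then obtain j where "j < n" "p!j = v" using len by (auto simp: in_set_conv_nth)
      then show "v \<in> (nth p) ` {j. j < n \<and> p!j \<le> p!i}" using v by auto
    qed
  qed
  moreover have "inj_on (nth p) {j. j < n \<and> p!j \<le> p!i}"
    using d len by (auto simp: inj_on_def distinct_conv_nth)
  ultimately have "card {j. j < n \<and> p!j \<le> p!i} = card {1..p!i}"
    by (metis card_image)
  then show ?thesis by simp
qed

lemma perm_unique:
  assumes p: "is_perm_word n p" and q: "is_perm_word n q" and o: "order_iso p q"
  shows "p = q"
proof (rule nth_equalityI)
  show "length p = length q" using p q unfolding is_perm_word_def by simp
next
  fix i assume "i < length p"
  then have i: "i < n" using p unfolding is_perm_word_def by simp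
  have len: "length p = n" using p unfolding is_perm_word_def by simp
  have "{j. j < n \<and> p!j \<le> p!i} = {j. j < n \<and> q!j \<le> q!i}"
    using o i len unfolding order_iso_def by (auto simp: not_less[symmetric])
  then show "p!i = q!i" using rank_perm[OF p i] rank_perm[OF q i] by simp
qed

lemma oi_trans: "order_iso u v \<Longrightarrow> order_iso v x \<Longrightarrow> order_iso u x"
  unfolding order_iso_def by auto

lemma oi_sym: "order_iso u v \<Longrightarrow> order_iso v u"
  unfolding order_iso_def by auto

lemma oi_distinct:
  assumes o: "order_iso u p" and d: "distinct p" shows "distinct u"
  unfolding distinct_conv_nth
proof (intro allI impI)
  fix i j assume ij: "i < length u" "j < length u" "i \<noteq> j"
  have l: "length u = length p" using o unfolding order_iso_def by simp
  have pne: "p!i \<noteq> p!j" using d ij l unfolding distinct_conv_nth by simp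
  have "(u!i > u!j) = (p!i > p!j)" "(u!j > u!i) = (p!j > p!i)"
    using o ij unfolding order_iso_def by auto
  then show "u!i \<noteq> u!j" using pne by auto
qed

lemma count:
  assumes sw: "set w \<subseteq> {1..n+1}" and sp: "superpattern n w"
  shows "fact n \<le> (\<Sum>k\<in>{1..n+1}. \<Prod>j\<in>{1..n+1}-{k}. card {i. i < length w \<and> w!i = j})"
proof -
  define m where "m = length w"
  define A where "A = {1..n+1}"
  define pos where "pos j = {i. i < m \<and> w!i = j}" for j
  define P where "P = permutations_of_set {1..n}"
  define F where "F = {I. I \<subseteq> {..<m} \<and> inj_on (nth w) I \<and> card I = n}"
  define T where "T = Sigma A (\<lambda>k. PiE (A - {k}) pos)"
  define g where "g = (\<lambda>(k::nat, f::nat \<Rightarrow> nat). f ` (A - {k}))"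
  define Ix where "Ix p = (SOME N. order_iso (nths w N) p) \<inter> {..<m}" for p
  have cP: "card P = fact n" unfolding P_def by simp
  have Pw: "is_perm_word n p" if "p \<in> P" for p
  proof -
    have "set p = {1..n}" "distinct p" using that unfolding P_def permutations_of_set_def by auto
    moreover have "length p = n" using distinct_card[OF \<open>distinct p\<close>] \<open>set p = {1..n}\<close> by simp
    ultimately show ?thesis unfolding is_perm_word_def by simp
  qed
  have Ix: "order_iso (nths w (Ix p)) p \<and> Ix p \<subseteq> {..<m}" if "p \<in> P" for p
  proof -
    from sp Pw[OF that] obtain u where "subseq u w" "order_iso u p"
      unfolding superpattern_def contains_pattern_def by blast
    then have "\<exists>N. order_iso (nths w N) p" by (auto simp: subseq_conv_nths)
    then have "order_iso (nths w (SOME N. order_iso (nths w N) p)) p" by (rule someI_ex)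
    then show ?thesis unfolding Ix_def m_def by (simp add: nths_restrict)
  qed
  have inj: "inj_on Ix P"
  proof (rule inj_onI)
    fix p q assume pq: "p \<in> P" "q \<in> P" "Ix p = Ix q"
    have "order_iso p q"
      using Ix[OF pq(1)] Ix[OF pq(2)] pq(3) by (metis oi_sym oi_trans)
    then show "p = q" using perm_unique Pw pq by blast
  qed
  have IxF: "Ix ` P \<subseteq> F"
  proof
    fix I assume "I \<in> Ix ` P"
    then obtain p where p: "p \<in> P" and I: "I = Ix p" by auto
    define u where "u = nths w I"
    have o: "order_iso u p" and Isub: "I \<subseteq> {..<m}" using Ix[OF p] I u_def by auto
    have lu: "length u = n" using o Pw[OF p] unfolding order_iso_def is_perm_word_def by simp
    have du: "distinct u" using oi_distinct[OF o] Pw[OF p] unfolding is_perm_word_def by simp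
    have fI: "finite I" using Isub finite_subset by blast
    have "{i. i < m \<and> i \<in> I} = I" using Isub by auto
    then have "length u = card I" unfolding u_def length_nths m_def[symmetric] by simp
    moreover have "set u = nth w ` I" unfolding u_def set_nths m_def[symmetric]
      using Isub by blast
    moreover have "card (set u) = length u" using du by (simp add: distinct_card)
    ultimately have "card (nth w ` I) = card I" by simp
    then have "inj_on (nth w) I" using fI by (simp add: eq_card_imp_inj_on)
    then show "I \<in> F" unfolding F_def using Isub lu \<open>length u = card I\<close> by simp
  qed
  have fF: "finite F" unfolding F_def
    by (rule finite_subset[of _ "Pow {..<m}"]) auto
  have fT: "finite T" unfolding T_def A_def pos_def
    by (intro finite_SigmaI finite_PiE) auto
  have Fg: "F \<subseteq> g ` T"
  proof
    fix I assume IF: "I \<in> F"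
    then have Isub: "I \<subseteq> {..<m}" and ij: "inj_on (nth w) I" and cI: "card I = n"
      unfolding F_def by auto
    define W where "W = nth w ` I"
    have "w!i \<in> set w" if "i \<in> I" for i using that Isub m_def by auto
    then have WA: "W \<subseteq> A" unfolding W_def A_def using sw by blast
    have cW: "card W = n" unfolding W_def using card_image[OF ij] cI by simp
    have cA: "card A = n + 1" unfolding A_def by simp
    have fW: "finite W" using WA finite_subset unfolding A_def by blast
    have "card (A - W) = 1" using card_Diff_subset[OF fW WA] cA cW by simp
    then obtain k where k: "A - W = {k}" by (rule card_1_singletonE)
    have kA: "k \<in> A" using k by auto
    have WAk: "W = A - {k}" using k WA by auto
    define f where "f = restrict (the_inv_into I (nth w)) (A - {k})"
    have fP: "f \<in> PiE (A - {k}) pos"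
    proof (rule PiE_I)
      fix j assume "j \<in> A - {k}"
      then obtain i where i: "i \<in> I" "j = w!i" using WAk W_def by auto
      have "f j = i" unfolding f_def using \<open>j \<in> A - {k}\<close> i the_inv_into_f_f[OF ij] by simp
      then show "f j \<in> pos j" unfolding pos_def using i Isub by auto
    next
      fix j assume "j \<notin> A - {k}" then show "f j = undefined" unfolding f_def restrict_def by auto
    qed
    have "f ` (A - {k}) = the_inv_into I (nth w) ` W" unfolding f_def WAk by simp
    also have "\<dots> = I" unfolding W_def using ij by simp
    finally have "g (k, f) = I" unfolding g_def by simp
    moreover have "(k, f) \<in> T" unfolding T_def using kA fP by simp
    ultimately show "I \<in> g ` T" by (metis image_eqI)
  qed
  have "fact n = card (Ix ` P)" using cP card_image[OF inj] by simp
  also have "\<dots> \<le> card F" using IxF fF by (rule card_mono[rotated])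
  also have "\<dots> \<le> card (g ` T)" using Fg fT by (intro card_mono) auto
  also have "\<dots> \<le> card T" using fT by (rule card_image_le)
  also have "card T = (\<Sum>k\<in>A. card (PiE (A-{k}) pos))"
    unfolding T_def by (rule card_SigmaI) (auto simp: A_def pos_def intro!: finite_PiE)
  also have "\<dots> = (\<Sum>k\<in>A. \<Prod>j\<in>A-{k}. card (pos j))"
    by (intro sum.cong refl card_PiE) (simp add: A_def)
  finally show ?thesis unfolding A_def pos_def m_def by simp
qed

lemma exp_ge_pow_fact:
  fixes x :: real assumes "0 \<le> x" shows "x ^ n / fact n \<le> exp x"
proof -
  have s: "(\<lambda>k. x ^ k / fact k) sums exp x"
    using exp_converges[of x] by (simp add: divide_inverse mult.commute)
  have "(\<Sum>k\<in>{n}. x ^ k / fact k) \<le> (\<Sum>k. x ^ k / fact k)"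
    using assms by (intro sum_le_suminf) (auto intro: sums_summable[OF s])
  then show ?thesis using sums_unique[OF s] by simp
qed

lemma sum_pos_le:
  fixes w :: "nat list" and n :: nat
  shows "(\<Sum>j\<in>{1..n+1}. card {i. i < length w \<and> w!i = j}) \<le> length w"
proof -
  have "(\<Sum>j\<in>{1..n+1}. card {i. i < length w \<and> w!i = j}) = card (\<Union>j\<in>{1..n+1}. {i. i < length w \<and> w!i = j})"
    by (rule card_UN_disjoint[symmetric]) auto
  also have "\<dots> \<le> card {..<length w}" by (intro card_mono) auto
  finally show ?thesis by simp
qed

lemma part1:
  assumes n: "n \<ge> 1" and sw: "set w \<subseteq> {1..n+1}" and sp: "superpattern n w"
  shows "(real n + 1) * (real (length w) / (real n + 1)) ^ n \<ge> fact n"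
proof -
  define a where "a j = real (card {i. i < length w \<and> w!i = j})" for j
  have "(fact n :: real) = real (fact n)" by simp
  also have "\<dots> \<le> real (\<Sum>k\<in>{1..n+1}. \<Prod>j\<in>{1..n+1}-{k}. card {i. i < length w \<and> w!i = j})"
    using count[OF sw sp] by (simp only: of_nat_le_iff)
  also have "\<dots> = (\<Sum>k\<in>{1..n+1}. \<Prod>j\<in>{1..n+1}-{k}. a j)" unfolding a_def by simp
  also have "\<dots> \<le> real (Suc n) * ((\<Sum>i\<in>{1..n+1}. a i) / real (Suc n)) ^ n"
    using mac[of "{1..n+1}" n a] unfolding a_def by simp
  also have "\<dots> \<le> real (Suc n) * (real (length w) / real (Suc n)) ^ n"
  proof -
    have "(\<Sum>i\<in>{1..n+1}. a i) \<le> real (length w)" unfolding a_def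
      using sum_pos_le[of w n] by (simp only: of_nat_sum[symmetric] of_nat_le_iff)
    moreover have "0 \<le> (\<Sum>i\<in>{1..n+1}. a i)" unfolding a_def by (simp add: sum_nonneg)
    ultimately show ?thesis by (intro mult_left_mono power_mono divide_right_mono) auto
  qed
  finally show ?thesis by (simp add: add.commute)
qed

lemma part1b:
  assumes n: "n \<ge> 1" and h: "(real n + 1) * (m / (real n + 1)) ^ n \<ge> fact n" and m: "0 \<le> m"
  shows "m \<ge> (real n + 1) * root n (fact n / (real n + 1))"
proof -
  have "fact n / (real n + 1) \<le> (m / (real n + 1)) ^ n" using h by (simp add: field_simps)
  then have "root n (fact n / (real n + 1)) \<le> root n ((m / (real n + 1)) ^ n)"
    using n by (intro real_root_le_mono) auto
  also have "\<dots> = m / (real n + 1)" using n m by (intro real_root_power_cancel) auto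
  finally show ?thesis by (simp add: field_simps)
qed

lemma root_lim: "(\<lambda>n. root n (real n + 1)) \<longlonglongrightarrow> 1"
proof (rule real_tendsto_sandwich)
  show "\<forall>\<^sub>F n in sequentially. 1 \<le> root n (real n + 1)"
    using eventually_ge_at_top[of 1] by eventually_elim simp
  show "\<forall>\<^sub>F n in sequentially. root n (real n + 1) \<le> root n 2 * root n (real n)"
    using eventually_ge_at_top[of 1]
  proof eventually_elim
    case (elim n)
    have "root n (real n + 1) \<le> root n (2 * real n)" using elim by (intro real_root_le_mono) auto
    then show ?case by (simp add: real_root_mult)
  qed
  show "(\<lambda>n. 1) \<longlonglongrightarrow> (1::real)" by simp
  have "(\<lambda>n. root n 2 * root n (real n)) \<longlonglongrightarrow> 1 * 1"
    by (intro tendsto_mult LIMSEQ_root_const LIMSEQ_root) auto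
  then show "(\<lambda>n. root n 2 * root n (real n)) \<longlonglongrightarrow> 1" by simp
qed

lemma root_fact: assumes n: "n \<ge> 1" shows "real n / exp 1 \<le> root n (fact n)"
proof -
  have "real n ^ n / fact n \<le> exp (real n)" by (rule exp_ge_pow_fact) simp
  then have "real n ^ n \<le> exp (real n) * fact n" by (simp add: field_simps)
  moreover have "exp (real n) = exp 1 ^ n" using exp_of_nat_mult[of n 1] by simp
  ultimately have "(real n / exp 1) ^ n \<le> fact n" by (simp add: power_divide field_simps)
  then have "root n ((real n / exp 1) ^ n) \<le> root n (fact n)" using n by (intro real_root_le_mono) auto
  moreover have "root n ((real n / exp 1) ^ n) = real n / exp 1" using n by (intro real_root_power_cancel) auto
  ultimately show ?thesis by simp
qed

theorem mainTheorem8: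
  shows "(\<forall>n w. n \<ge> 1 \<longrightarrow> set w \<subseteq> {1..n+1} \<longrightarrow> superpattern n w \<longrightarrow>
            (let m = real (length w) in
               (real n + 1) * (m / (real n + 1)) ^ n \<ge> fact n \<and>
               m \<ge> (real n + 1) * root n (fact n / (real n + 1))))
       \<and> (\<exists>\<epsilon> :: nat \<Rightarrow> real. \<epsilon> \<longlonglongrightarrow> 0 \<and>
            (\<forall>n w. n \<ge> 1 \<longrightarrow> set w \<subseteq> {1..n+1} \<longrightarrow> superpattern n w \<longrightarrow>
               real (length w) \<ge> (1 - \<epsilon> n) * real n ^ 2 / exp 1))"
proof
  show "\<forall>n w. n \<ge> 1 \<longrightarrow> set w \<subseteq> {1..n+1} \<longrightarrow> superpattern n w \<longrightarrow>
            (let m = real (length w) in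
               (real n + 1) * (m / (real n + 1)) ^ n \<ge> fact n \<and>
               m \<ge> (real n + 1) * root n (fact n / (real n + 1)))"
    using part1 part1b by (auto simp: Let_def)
next
  define \<epsilon> where "\<epsilon> n = 1 - 1 / root n (real n + 1)" for n
  have "\<epsilon> \<longlonglongrightarrow> 1 - 1 / 1" unfolding \<epsilon>_def by (intro tendsto_intros root_lim) auto
  then have lim: "\<epsilon> \<longlonglongrightarrow> 0" by simp
  have "real (length w) \<ge> (1 - \<epsilon> n) * real n ^ 2 / exp 1"
    if n: "n \<ge> 1" and sw: "set w \<subseteq> {1..n+1}" and sp: "superpattern n w" for n w
  proof -
    define r where "r = root n (real n + 1)"
    have r0: "r > 0" unfolding r_def using n by simp
    have "real (length w) \<ge> (real n + 1) * root n (fact n / (real n + 1))"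
      using part1b[OF n part1[OF n sw sp]] by simp
    moreover have "root n (fact n / (real n + 1)) = root n (fact n) / r"
      unfolding r_def by (simp add: real_root_divide)
    moreover have "root n (fact n) / r \<ge> (real n / exp 1) / r"
      using root_fact[OF n] r0 by (intro divide_right_mono) auto
    ultimately have "real (length w) \<ge> (real n + 1) * ((real n / exp 1) / r)"
      by (smt (verit, best) mult_left_mono of_nat_0_le_iff)
    moreover have "(real n + 1) * ((real n / exp 1) / r) \<ge> real n * ((real n / exp 1) / r)"
      using r0 by (intro mult_right_mono) auto
    moreover have "(1 - \<epsilon> n) * real n ^ 2 / exp 1 = real n * ((real n / exp 1) / r)"
      unfolding \<epsilon>_def r_def[symmetric] by (simp add: power2_eq_square)
    ultimately show ?thesis by linarith
  qed
  then show "\<exists>\<epsilon> :: nat \<Rightarrow> real. \<epsilon> \<longlonglongrightarrow> 0 \<and>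
            (\<forall>n w. n \<ge> 1 \<longrightarrow> set w \<subseteq> {1..n+1} \<longrightarrow> superpattern n w \<longrightarrow>
               real (length w) \<ge> (1 - \<epsilon> n) * real n ^ 2 / exp 1)"
    using lim by blast
qed

end
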